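(* Let $\rho$ be a separable two-qubit state with Bloch representation $\rho=\frac14\big[I\otimes I+\sum_i x_i\sigma_i\otimes I+\sum_j y_j I\otimes\sigma_j+\sum_{i,j}T_{ij}\sigma_i\otimes\sigma_j\big]$. If $\mathbf{x}=\mathbf{0}$, or if $TT^t=\lambda^2 I$ for some real $\lambda$, then $\rho$ is not maximally discordant among separable states, i.e. $\mathcal{D}(\rho)<\sup\{\mathcal{D}(\tau):\tau \text{ a separable two-qubit state}\}$.
   Context: A two-qubit state is a density matrix on $\mathbb{C}^2\otimes\mathbb{C}^2$; it is separable if it is a convex combination of product states. Every two-qubit state can be written uniquely as $\rho=\frac14\big[I\otimes I+\sum_i x_i\sigma_i\otimes I+\sum_j y_j I\otimes\sigma_j+\sum_{i,j}T_{ij}\sigma_i\otimes\sigma_j\big]$ with $\mathbf{x},\mathbf{y}\in\mathbb{R}^3$, $T\in\mathbb{R}^{3\times3}$, where $\sigma_1,\sigma_2,\sigma_3$ are the Pauli matrices. The set $\Omega_0$ of classical-quantum states consists of states $\sum_k p_k|\psi_k\rangle\langle\psi_k|\otimes\rho_k^B$ with $\{|\psi_k\rangle\}$ an orthonormal basis of the first qubit, $p_k\ge0$ summing to one, and $\rho_k^B$ states of the second qubit. The normalized geometric discord is $\mathcal{D}(\rho)=2\min_{\chi\in\Omega_0}\operatorname{Tr}\big((\rho-\chi)^\dagger(\rho-\chi)\big)$, which equals $\frac12\big[\|\mathbf{x}\|^2+\|T\|^2-\lambda_{\max}(\mathbf{x}\mathbf{x}^t+TT^t)\big]$, with $\|T\|^2=\operatorname{Tr}(TT^t)$.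 *)

theory Defs
  imports "HOL-Analysis.Analysis"
begin

text \<open>Single-qubit operators: complex 2x2 matrices; two-qubit operators: complex
  matrices indexed by the product type 2 x 2 (i.e. C^2 tensor C^2).\<close>

type_synonym qop = "complex^2^2"
type_synonym qqop = "complex^(2\<times>2)^(2\<times>2)"

definition kron :: "qop \<Rightarrow> qop \<Rightarrow> qqop" where
  "kron A B = (\<chi> r c. A $ fst r $ fst c * B $ snd r $ snd c)"

definition pauli :: "3 \<Rightarrow> qop" where
  "pauli i = (if i = 1 then vector [vector [0, 1], vector [1, 0]]
              else if i = 2 then vector [vector [0, -\<i>], vector [\<i>, 0]]
              else vector [vector [1, 0], vector [0, -1]])"

definition hermitian_op :: "complex^'n^'n \<Rightarrow> bool" where
  "hermitian_op A \<longleftrightarrow> (\<forall>i j. A $ i $ j = cnj (A $ j $ i))"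

definition psd_op :: "complex^'n^'n \<Rightarrow> bool" where
  "psd_op A \<longleftrightarrow> (\<forall>v::complex^'n.
      Im (\<Sum>i\<in>UNIV. \<Sum>j\<in>UNIV. cnj (v $ i) * A $ i $ j * v $ j) = 0 \<and>
      Re (\<Sum>i\<in>UNIV. \<Sum>j\<in>UNIV. cnj (v $ i) * A $ i $ j * v $ j) \<ge> 0)"

definition tr_op :: "complex^'n^'n \<Rightarrow> complex" where
  "tr_op A = (\<Sum>i\<in>UNIV. A $ i $ i)"

definition density :: "complex^'n^'n \<Rightarrow> bool" where
  "density A \<longleftrightarrow> hermitian_op A \<and> psd_op A \<and> tr_op A = 1"

definition separable :: "qqop \<Rightarrow> bool" where
  "separable \<rho> \<longleftrightarrow> (\<exists>(n::nat) (p::nat \<Rightarrow> real) (A::nat \<Rightarrow> qop) (B::nat \<Rightarrow> qop).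
      (\<forall>k<n. p k \<ge> 0 \<and> density (A k) \<and> density (B k)) \<and> (\<Sum>k<n. p k) = 1 \<and>
      \<rho> = (\<Sum>k<n. p k *\<^sub>R kron (A k) (B k)))"

definition proj :: "complex^2 \<Rightarrow> qop" where
  "proj \<psi> = (\<chi> i j. \<psi> $ i * cnj (\<psi> $ j))"

definition cinner2 :: "complex^2 \<Rightarrow> complex^2 \<Rightarrow> complex" where
  "cinner2 u v = (\<Sum>i\<in>UNIV. cnj (u $ i) * v $ i)"

definition CQ_states :: "qqop set" where
  "CQ_states = {p0 *\<^sub>R kron (proj \<psi>0) \<rho>0 + p1 *\<^sub>R kron (proj \<psi>1) \<rho>1 |
      p0 p1 \<psi>0 \<psi>1 \<rho>0 \<rho>1.
      p0 \<ge> 0 \<and> p1 \<ge> 0 \<and> p0 + p1 = 1 \<and>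
      cinner2 \<psi>0 \<psi>0 = 1 \<and> cinner2 \<psi>1 \<psi>1 = 1 \<and> cinner2 \<psi>0 \<psi>1 = 0 \<and>
      density \<rho>0 \<and> density \<rho>1}"

text \<open>Tr((A-B)^dagger (A-B)) written out.\<close>
definition hs_dist2 :: "qqop \<Rightarrow> qqop \<Rightarrow> real" where
  "hs_dist2 A B = (\<Sum>i\<in>UNIV. \<Sum>j\<in>UNIV. (cmod (A $ i $ j - B $ i $ j))\<^sup>2)"

text \<open>Normalized geometric discord (minimum realised as infimum).\<close>
definition geom_discord :: "qqop \<Rightarrow> real" where
  "geom_discord \<rho> = 2 * Inf (hs_dist2 \<rho> ` CQ_states)"

definition bloch_state :: "real^3 \<Rightarrow> real^3 \<Rightarrow> real^3^3 \<Rightarrow> qqop" where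
  "bloch_state x y T = (1/4) *\<^sub>R (kron (mat 1) (mat 1)
      + (\<Sum>i\<in>UNIV. (x $ i) *\<^sub>R kron (pauli i) (mat 1))
      + (\<Sum>j\<in>UNIV. (y $ j) *\<^sub>R kron (mat 1) (pauli j))
      + (\<Sum>i\<in>UNIV. \<Sum>j\<in>UNIV. (T $ i $ j) *\<^sub>R kron (pauli i) (pauli j)))"

end

theory Submission
  imports Defs
begin


lemma sum4: "sum f (UNIV::(2\<times>2) set) = f(1,1)+f(1,2)+f(2,1)+f(2,2)"
  by (simp add: UNIV_Times_UNIV[symmetric] sum.cartesian_product' sum_2 add.assoc del: UNIV_Times_UNIV)

lemma pauli_e: 
  "pauli 1 $ 1 $ 1 = 0" "pauli 1 $ 1 $ 2 = 1" "pauli 1 $ 2 $ 1 = 1" "pauli 1 $ 2 $ 2 = 0"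
  "pauli 2 $ 1 $ 1 = 0" "pauli 2 $ 1 $ 2 = -\<i>" "pauli 2 $ 2 $ 1 = \<i>" "pauli 2 $ 2 $ 2 = 0"
  "pauli 3 $ 1 $ 1 = 1" "pauli 3 $ 1 $ 2 = 0" "pauli 3 $ 2 $ 1 = 0" "pauli 3 $ 2 $ 2 = -1"
  by (simp_all add: pauli_def)

definition bq :: "real^3 \<Rightarrow> qop" where
  "bq a = (1/2) *\<^sub>R (mat 1 + (\<Sum>i\<in>UNIV. (a $ i) *\<^sub>R pauli i))"

lemma bq_e: "bq a $ 1 $ 1 = (1 + a$3)/2" "bq a $ 1 $ 2 = (a$1 - \<i> * a$2)/2"
  "bq a $ 2 $ 1 = (a$1 + \<i> * a$2)/2" "bq a $ 2 $ 2 = (1 - a$3)/2"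
  apply (simp_all add: bq_def sum_3 pauli_e mat_def)
  apply (simp_all add: scaleR_conv_of_real field_simps)
  done

lemma bloch_entry: "bloch_state x y T $ r $ c = (1/4) * (mat 1 $ fst r $ fst c * mat 1 $ snd r $ snd c
   + (\<Sum>i\<in>UNIV. of_real (x$i) * pauli i $ fst r $ fst c * mat 1 $ snd r $ snd c)
   + (\<Sum>j\<in>UNIV. of_real (y$j) * mat 1 $ fst r $ fst c * pauli j $ snd r $ snd c)
   + (\<Sum>i\<in>UNIV. \<Sum>j\<in>UNIV. of_real (T$i$j) * pauli i $ fst r $ fst c * pauli j $ snd r $ snd c))"
  apply (simp add: bloch_state_def kron_def sum_component)
  apply (simp add: scaleR_conv_of_real mult.assoc)
  done

lemma hs_bloch: "hs_dist2 (bloch_state x y T) (bloch_state x' y' T') =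
  (1/4) * ((\<Sum>i\<in>UNIV. (x$i - x'$i)^2) + (\<Sum>i\<in>UNIV. (y$i - y'$i)^2)
     + (\<Sum>i\<in>UNIV. \<Sum>j\<in>UNIV. (T$i$j - T'$i$j)^2))"
  unfolding hs_dist2_def bloch_entry sum4
  apply (simp add: sum_3 pauli_e mat_def cmod_power2 algebra_simps)
  apply (simp add: power2_eq_square field_simps)
  done

definition outer :: "real^3 \<Rightarrow> real^3 \<Rightarrow> real^3^3" where
  "outer a b = (\<chi> i j. a$i * b$j)"

lemma prod_eq_iff: "(A::qqop) = B \<longleftrightarrow> (\<forall>r1 r2 c1 c2. A $ (r1,r2) $ (c1,c2) = B $ (r1,r2) $ (c1,c2))"
  by (auto simp: vec_eq_iff)

lemma kron_bq: "kron (bq a) (bq b) = bloch_state a b (outer a b)"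
  unfolding prod_eq_iff forall_2 kron_def bloch_entry
  apply (simp add: bq_e sum_3 pauli_e mat_def outer_def)
  apply (simp_all add: complex_eq_iff algebra_simps)
  done

lemma bl_add: "bloch_state (x+x') (y+y') (T+T') = bloch_state x y T + bloch_state x' y' T' - bloch_state 0 0 0"
  unfolding prod_eq_iff forall_2 
  apply (simp add: bloch_entry sum_3 pauli_e mat_def)
  apply (simp_all add: complex_eq_iff field_simps)
  done

lemma bl_scale: "bloch_state (c *\<^sub>R x) (c *\<^sub>R y) (c *\<^sub>R T) = c *\<^sub>R bloch_state x y T + (1-c) *\<^sub>R bloch_state 0 0 0"
  unfolding prod_eq_iff forall_2 
  apply (simp add: bloch_entry sum_3 pauli_e mat_def)
  apply (simp_all add: complex_eq_iff field_simps)
  done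

lemma bloch_comb2: "p0 + p1 = 1 \<Longrightarrow> p0 *\<^sub>R bloch_state x y T + p1 *\<^sub>R bloch_state x' y' T'
   = bloch_state (p0 *\<^sub>R x + p1 *\<^sub>R x') (p0 *\<^sub>R y + p1 *\<^sub>R y') (p0 *\<^sub>R T + p1 *\<^sub>R T')"
  unfolding bl_add bl_scale by (simp add: algebra_simps) (metis scaleR_add_left scaleR_one)

lemma bloch_combn_aux: "(\<Sum>k<(n::nat). p k *\<^sub>R bloch_state (u k) (v k) (W k)) + (1 - (\<Sum>k<n. p k)) *\<^sub>R bloch_state 0 0 0
   = bloch_state (\<Sum>k<n. p k *\<^sub>R u k) (\<Sum>k<n. p k *\<^sub>R v k) (\<Sum>k<n. p k *\<^sub>R W k)"
proof (induction n)
  case 0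
  then show ?case by simp
next
  case (Suc n)
  have "bloch_state (\<Sum>k<Suc n. p k *\<^sub>R u k) (\<Sum>k<Suc n. p k *\<^sub>R v k) (\<Sum>k<Suc n. p k *\<^sub>R W k)
    = bloch_state (\<Sum>k<n. p k *\<^sub>R u k) (\<Sum>k<n. p k *\<^sub>R v k) (\<Sum>k<n. p k *\<^sub>R W k)
      + bloch_state (p n *\<^sub>R u n) (p n *\<^sub>R v n) (p n *\<^sub>R W n) - bloch_state 0 0 0"
    by (simp add: bl_add)
  also have "\<dots> = (\<Sum>k<Suc n. p k *\<^sub>R bloch_state (u k) (v k) (W k)) + (1 - (\<Sum>k<Suc n. p k)) *\<^sub>R bloch_state 0 0 0"
    unfolding bl_scale Suc.IH[symmetric] by (simp add: algebra_simps)
  finally show ?case by simp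
qed

lemma bloch_combn: "(\<Sum>k<(n::nat). p k) = 1 \<Longrightarrow> (\<Sum>k<n. p k *\<^sub>R bloch_state (u k) (v k) (W k))
   = bloch_state (\<Sum>k<n. p k *\<^sub>R u k) (\<Sum>k<n. p k *\<^sub>R v k) (\<Sum>k<n. p k *\<^sub>R W k)"
  using bloch_combn_aux[where p=p and n=n and u=u and v=v and W=W] by simp

lemma nsq3: "(norm (a::real^3))^2 = a$1^2 + a$2^2 + a$3^2"
  unfolding power2_norm_eq_inner inner_vec_def sum_3 by (simp add: power2_eq_square)

lemma quad2: "(\<Sum>i\<in>UNIV. \<Sum>j\<in>UNIV. cnj (v $ i) * (A::qop) $ i $ j * v $ j) =
   cnj (v$1) * A$1$1 * v$1 + cnj (v$1) * A$1$2 * v$2 + cnj (v$2) * A$2$1 * v$1 + cnj (v$2) * A$2$2 * v$2"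
  by (simp add: sum_2)

lemma bq_density: assumes "norm a \<le> 1" shows "density (bq a)"
proof -
  have h: "hermitian_op (bq a)"
    unfolding hermitian_op_def forall_2 by (simp add: bq_e complex_eq_iff)
  have t: "tr_op (bq a) = 1"
    unfolding tr_op_def sum_2 by (simp add: bq_e field_simps)
  have a1: "a$1^2 + a$2^2 + a$3^2 \<le> 1" using assms nsq3[of a]
    by (metis norm_ge_zero power_le_one)
  have p: "psd_op (bq a)"
    unfolding psd_op_def quad2
  proof
    fix v :: "complex^2"
    define p where "p = Re (v$1)"
    define q where "q = Im (v$1)"
    define r where "r = Re (v$2)"
    define s where "s = Im (v$2)"
    define m1 where "m1 = 2 * (p * r + q * s)"
    define m2 where "m2 = 2 * (p * s - q * r)"
    define m3 where "m3 = p^2+q^2-r^2-s^2"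
    define N where "N = p^2+q^2+r^2+s^2"
    have mN: "m1^2+m2^2+m3^2 = N^2" unfolding m1_def m2_def m3_def N_def by algebra
    have lag: "(a$1^2 + a$2^2 + a$3^2)*(m1^2+m2^2+m3^2) - (a$1*m1+a$2*m2+a$3*m3)^2
       = (a$1*m2-a$2*m1)^2 + (a$1*m3-a$3*m1)^2 + (a$2*m3-a$3*m2)^2" by algebra
    have cs: "(a$1*m1+a$2*m2+a$3*m3)^2 \<le> (a$1^2 + a$2^2 + a$3^2)*(m1^2+m2^2+m3^2)"
      using lag by (smt (verit) zero_le_power2)
    also have "\<dots> \<le> 1 * (m1^2+m2^2+m3^2)"
      by (rule mult_right_mono[OF a1]) simp
    finally have "(a$1*m1+a$2*m2+a$3*m3)^2 \<le> N^2" using mN by simp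
    hence "(-(a$1*m1+a$2*m2+a$3*m3))^2 \<le> N^2" by (simp only: power2_minus)
    moreover have "N \<ge> 0" unfolding N_def by simp
    ultimately have "-(a$1*m1+a$2*m2+a$3*m3) \<le> N" by (rule power2_le_imp_le)
    hence key: "N + (a$1*m1+a$2*m2+a$3*m3) \<ge> 0" by simp
    have v1: "v$1 = Complex p q" and v2: "v$2 = Complex r s" unfolding p_def q_def r_def s_def by simp_all
    show "Im (cnj (v$1) * bq a$1$1 * v$1 + cnj (v$1) * bq a$1$2 * v$2 + cnj (v$2) * bq a$2$1 * v$1 + cnj (v$2) * bq a$2$2 * v$2) = 0 \<and>
      0 \<le> Re (cnj (v$1) * bq a$1$1 * v$1 + cnj (v$1) * bq a$1$2 * v$2 + cnj (v$2) * bq a$2$1 * v$1 + cnj (v$2) * bq a$2$2 * v$2)"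
      unfolding v1 v2 bq_e using key unfolding m1_def m2_def m3_def N_def
      by (simp add: field_simps power2_eq_square)
  qed
  show ?thesis using h t p unfolding density_def by simp
qed



lemma q1_calc: "Re (cnj (Complex br bi) * of_real al * Complex br bi + cnj (Complex br bi) * Complex br bi * (- of_real al)
   + cnj (- of_real al) * Complex br (-bi) * Complex br bi + cnj (- of_real al) * of_real de * (- of_real al)) = al * (al*de - (br^2+bi^2))"
  by (simp add: algebra_simps power2_eq_square)

lemma q2_calc: "Re (cnj (- of_real de) * of_real al * (- of_real de) + cnj (- of_real de) * Complex br bi * Complex br (-bi)
   + cnj (Complex br (-bi)) * Complex br (-bi) * (- of_real de) + cnj (Complex br (-bi)) * of_real de * Complex br (-bi)) = de * (al*de - (br^2+bi^2))"
  by (simp add: algebra_simps power2_eq_square)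

lemma density_bq: assumes "density (A::qop)" shows "\<exists>a. norm a \<le> 1 \<and> A = bq a"
proof -
  have h: "hermitian_op A" and ps: "psd_op A" and t: "tr_op A = 1" using assms unfolding density_def by auto
  define al where "al = Re (A$1$1)"
  define de where "de = Re (A$2$2)"
  define br where "br = Re (A$1$2)"
  define bi where "bi = Im (A$1$2)"
  have A11: "A$1$1 = of_real al" using h unfolding hermitian_op_def al_def
    by (metis Re_complex_of_real cnj.simps complex_eq_iff Im_complex_of_real neg_equal_zero)
  have A22: "A$2$2 = of_real de" using h unfolding hermitian_op_def de_def
    by (metis Re_complex_of_real cnj.simps complex_eq_iff Im_complex_of_real neg_equal_zero)
  have A12: "A$1$2 = Complex br bi" unfolding br_def bi_def by simp
  have "A$2$1 = cnj (A$1$2)" using h unfolding hermitian_op_def by blast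
  hence A21: "A$2$1 = Complex br (-bi)" unfolding br_def bi_def by (simp add: complex_eq_iff)
  have ad: "al + de = 1" using t unfolding tr_op_def sum_2 A11 A22
    by (metis of_real_add of_real_eq_1_iff)
  have q1: "0 \<le> al * (al*de - (br^2+bi^2))"
  proof -
    have "0 \<le> Re (\<Sum>i\<in>UNIV. \<Sum>j\<in>UNIV. cnj (vector [Complex br bi, - of_real al] $ i) * A $ i $ j * (vector [Complex br bi, - of_real al] :: complex^2) $ j)"
      using ps unfolding psd_op_def by blast
    thus ?thesis unfolding quad2 by (simp only: vector_2 A11 A22 A12 A21 q1_calc)
  qed
  have q2: "0 \<le> de * (al*de - (br^2+bi^2))"
  proof -
    have "0 \<le> Re (\<Sum>i\<in>UNIV. \<Sum>j\<in>UNIV. cnj (vector [- of_real de, Complex br (-bi)] $ i) * A $ i $ j * (vector [- of_real de, Complex br (-bi)] :: complex^2) $ j)"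
      using ps unfolding psd_op_def by blast
    thus ?thesis unfolding quad2 by (simp only: vector_2 A11 A22 A12 A21 q2_calc)
  qed
  have "al*de - (br^2+bi^2) = (al+de) * (al*de - (br^2+bi^2))" using ad by simp
  hence det: "br^2+bi^2 \<le> al*de" using q1 q2 by (simp add: distrib_right)
  define a :: "real^3" where "a = vector [2*br, -2*bi, al - de]"
  have sq: "(al-de)^2 = (al+de)^2 - 4*al*de" by algebra
  have "norm a ^2 \<le> 1^2" unfolding nsq3 a_def using det ad sq by simp
  hence "norm a \<le> 1" by (rule power2_le_imp_le) simp
  moreover have "A = bq a"
    unfolding vec_eq_iff forall_2 using ad by (simp add: bq_e a_def A11 A22 A12 A21 complex_eq_iff field_simps)
  ultimately show ?thesis by blast
qed



lemma orth_rel: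
  fixes a b c d :: complex
  assumes h1: "cnj a * a + cnj b * b = 1" and h2: "cnj c * c + cnj d * d = 1" and h3: "cnj a * c + cnj b * d = 0"
  shows "c * cnj c = b * cnj b \<and> d * cnj d = a * cnj a \<and> c * cnj d = - (a * cnj b)"
proof -
  have h3': "a * cnj c + b * cnj d = 0" using arg_cong[OF h3, of cnj] by (simp add: mult.commute)
  define l where "l = a*d - b*c"
  have ec: "c = - l * cnj b" unfolding l_def using h1 h3 by algebra
  have ed: "d = l * cnj a" unfolding l_def using h1 h3 by algebra
  have ecc: "cnj c = - cnj l * b" using arg_cong[OF ec, of cnj] by simp
  have edc: "cnj d = cnj l * a" using arg_cong[OF ed, of cnj] by simp
  have ll: "l * cnj l = 1" using h2[unfolded ecc edc, unfolded ec ed] h1 by algebra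
  show ?thesis unfolding ecc edc unfolding ec ed using ll by algebra
qed
lemma bq_inj: "bq a = bq b \<Longrightarrow> a = b"
proof -
  assume "bq a = bq b"
  hence "bq a $1$1 = bq b $1$1" "bq a $1$2 = bq b $1$2" by simp_all
  thus "a = b" unfolding bq_e vec_eq_iff forall_3 by (simp add: complex_eq_iff)
qed

lemma proj_bq0:
  assumes "cinner2 \<psi> \<psi> = 1"
  shows "\<exists>n. norm n = 1 \<and> proj \<psi> = bq n"
proof -
  obtain a1 a2 where a: "\<psi>$1 = Complex a1 a2" by (metis complex_surj)
  obtain b1 b2 where b: "\<psi>$2 = Complex b1 b2" by (metis complex_surj)
  have h: "a1^2+a2^2+b1^2+b2^2 = 1" using assms unfolding cinner2_def sum_2 a b
    by (simp add: complex_eq_iff power2_eq_square)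
  define n :: "real^3" where "n = vector [2*(a1*b1+a2*b2), 2*(a1*b2-a2*b1), a1^2+a2^2-b1^2-b2^2]"
  have "(norm n)^2 = 1^2" unfolding nsq3 n_def using h
    by simp algebra
  hence "norm n = 1" using norm_ge_zero[of n] power2_eq_iff_nonneg[of "norm n" 1] by simp
  moreover have "proj \<psi> = bq n"
    unfolding vec_eq_iff forall_2 proj_def using h
    by (simp add: a b bq_e n_def complex_eq_iff field_simps power2_eq_square)
  ultimately show ?thesis by blast
qed
lemma proj_bq:
  assumes h1: "cinner2 \<psi>0 \<psi>0 = 1" and h2: "cinner2 \<psi>1 \<psi>1 = 1" and h3: "cinner2 \<psi>0 \<psi>1 = 0"
  shows "\<exists>n. norm n = 1 \<and> proj \<psi>0 = bq n \<and> proj \<psi>1 = bq (-n)"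
proof -
  obtain n where n1: "norm n = 1" and pn: "proj \<psi>0 = bq n" using proj_bq0[OF h1] by blast
  have r: "\<psi>1$1 * cnj (\<psi>1$1) = \<psi>0$2 * cnj (\<psi>0$2) \<and> \<psi>1$2 * cnj (\<psi>1$2) = \<psi>0$1 * cnj (\<psi>0$1)
     \<and> \<psi>1$1 * cnj (\<psi>1$2) = - (\<psi>0$1 * cnj (\<psi>0$2))"
    by (rule orth_rel) (use h1 h2 h3 in \<open>simp_all add: cinner2_def sum_2\<close>)
  have r2: "\<psi>1$2 * cnj (\<psi>1$1) = - (\<psi>0$2 * cnj (\<psi>0$1))"
    using arg_cong[OF conjunct2[OF conjunct2[OF r]], of cnj] by (simp add: mult.commute)
  have e: "proj \<psi>0 $ i $ j = bq n $ i $ j" for i j using pn by simp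
  have "proj \<psi>1 = bq (-n)"
    unfolding vec_eq_iff forall_2 proj_def using r r2 e[of 1 1] e[of 1 2] e[of 2 1] e[of 2 2]
    apply (simp add: bq_e proj_def complex_eq_iff)
    by (simp add: algebra_simps)
  thus ?thesis using n1 pn by blast
qed
lemma bq_proj_exists:
  assumes "norm e = 1"
  shows "\<exists>\<psi>0 \<psi>1. cinner2 \<psi>0 \<psi>0 = 1 \<and> cinner2 \<psi>1 \<psi>1 = 1 \<and> cinner2 \<psi>0 \<psi>1 = 0 \<and>
     proj \<psi>0 = bq e \<and> proj \<psi>1 = bq (-e)"
proof -
  have en: "e$1^2 + e$2^2 + e$3^2 = 1" using assms nsq3[of e] by simp
  obtain \<psi>0 where c0: "cinner2 \<psi>0 \<psi>0 = 1" and p0: "proj \<psi>0 = bq e"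
  proof (cases "e$3 = -1")
    case True
    hence "e$1^2 + e$2^2 = 0" using en by simp
    hence z: "e$1 = 0" "e$2 = 0" by (simp_all add: sum_power2_eq_zero_iff)
    show ?thesis
      by (rule that[of "vector [0, 1]"])
        (use True z in \<open>simp_all add: cinner2_def sum_2 vec_eq_iff forall_2 proj_def bq_e\<close>)
  next
    case False
    have "e$3^2 \<le> 1" using en zero_le_power2[of "e$1"] zero_le_power2[of "e$2"] by linarith
    hence "\<bar>e$3\<bar>^2 \<le> 1^2" by simp
    hence "\<bar>e$3\<bar> \<le> 1" by (rule power2_le_imp_le) simp
    hence ge: "e$3 \<ge> -1" by simp
    with False have pos: "1 + e$3 > 0" by simp
    define s where "s = sqrt ((1 + e$3)/2)"
    have s0: "s > 0" unfolding s_def using pos by simp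
    have s2: "s^2 = (1 + e$3)/2" unfolding s_def using pos by simp
    have e12: "e$1^2 + e$2^2 = (1 - e$3) * (1 + e$3)" using en by (simp add: algebra_simps power2_eq_square)
    have "(e$1/(2 * s))^2 + (e$2/(2 * s))^2 = (e$1^2+e$2^2)/(4 * s^2)"
      by (simp add: power_divide add_divide_distrib power_mult_distrib)
    also have "\<dots> = ((1 - e$3) * (1 + e$3))/(2 * (1 + e$3))" using s2 by (simp only: e12)
    also have "\<dots> = (1 - e$3)/2"
    proof -
      have "1 + e$3 \<noteq> 0" using pos by simp
      thus ?thesis by (simp add: field_simps)
    qed
    finally have bb0: "(e$1/(2 * s)) * (e$1/(2 * s)) + (e$2/(2 * s)) * (e$2/(2 * s)) = (1 - e$3)/2"
      by (simp add: power2_eq_square)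
    define b1 where "b1 = e$1/(2 * s)"
    define b2 where "b2 = e$2/(2 * s)"
    have bb: "b1 * b1 + b2 * b2 = (1 - e$3)/2" using bb0 unfolding b1_def b2_def .
    have sb1: "s * b1 = e$1/2" and sb2: "s * b2 = e$2/2" using s0 unfolding b1_def b2_def by simp_all
    have ss: "s * s = (1 + e$3)/2" using s2 by (simp add: power2_eq_square)
    define \<psi> :: "complex^2" where "\<psi> = vector [of_real s, Complex b1 b2]"
    show ?thesis
    proof (rule that[of \<psi>])
      show "cinner2 \<psi> \<psi> = 1" unfolding cinner2_def sum_2 \<psi>_def
        using bb ss by (simp add: complex_eq_iff)
      show "proj \<psi> = bq e"
        unfolding vec_eq_iff forall_2 proj_def \<psi>_def using bb ss sb1 sb2
        by (simp add: bq_e complex_eq_iff mult.commute)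
    qed
  qed
  define \<psi>1 :: "complex^2" where "\<psi>1 = vector [- cnj (\<psi>0$2), cnj (\<psi>0$1)]"
  have c1: "cinner2 \<psi>1 \<psi>1 = 1" using c0 unfolding cinner2_def sum_2 \<psi>1_def by (simp add: algebra_simps)
  have c01: "cinner2 \<psi>0 \<psi>1 = 0" unfolding cinner2_def sum_2 \<psi>1_def by (simp add: algebra_simps)
  obtain n where "proj \<psi>0 = bq n" "proj \<psi>1 = bq (-n)" using proj_bq[OF c0 c1 c01] by blast
  with p0 have "n = e" using bq_inj by metis
  thus ?thesis using c0 c1 c01 p0 \<open>proj \<psi>1 = bq (-n)\<close> by blast
qed
lemma nsqM: "(norm (M::real^3^3))^2 = (\<Sum>i\<in>UNIV. \<Sum>j\<in>UNIV. (M$i$j)^2)"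
  unfolding power2_norm_eq_inner inner_vec_def by (simp add: power2_eq_square)

lemma nsqv: "(norm (v::real^3))^2 = (\<Sum>i\<in>UNIV. (v$i)^2)"
  unfolding power2_norm_eq_inner inner_vec_def by (simp add: power2_eq_square)

lemma hs_bloch': "hs_dist2 (bloch_state x y T) (bloch_state x' y' T') =
  (1/4) * ((norm (x - x'))^2 + (norm (y - y'))^2 + (norm (T - T'))^2)"
  unfolding hs_bloch nsqM nsqv by simp

lemma outer_lin: "p0 *\<^sub>R outer n r0 + p1 *\<^sub>R outer (-n) r1 = outer n (p0 *\<^sub>R r0 - p1 *\<^sub>R r1)"
  unfolding outer_def vec_eq_iff by (simp add: algebra_simps)

lemma GL1: assumes "norm n = 1"
  shows "(norm (x - q *\<^sub>R n))^2 = (norm x)^2 - (x \<bullet> n)^2 + (q - x \<bullet> n)^2"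
proof -
  have "n \<bullet> n = 1" using assms by (simp add: power2_norm_eq_inner[symmetric])
  thus ?thesis unfolding power2_norm_eq_inner
    by (simp add: inner_diff_left inner_diff_right inner_commute power2_eq_square algebra_simps)
qed

lemma GL2: assumes "norm n = 1"
  shows "(norm (T - outer n w))^2 = (norm T)^2 - (norm (n v* T))^2 + (norm (w - n v* T))^2"
proof -
  have h: "n$1^2 + n$2^2 + n$3^2 = 1" using assms nsq3[of n] by simp
  show ?thesis unfolding nsqM nsqv using h
    by (simp add: sum_3 outer_def vector_matrix_mult_def) algebra
qed
lemma cq_bloch: assumes "X \<in> CQ_states"
  shows "\<exists>n q y' w. norm n = 1 \<and> X = bloch_state (q *\<^sub>R n) y' (outer n w)"
proof -
  obtain p0 p1 \<psi>0 \<psi>1 \<rho>0 \<rho>1 where ch: "X = p0 *\<^sub>R kron (proj \<psi>0) \<rho>0 + p1 *\<^sub>R kron (proj \<psi>1) \<rho>1"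
    and p: "p0 + p1 = 1" and c: "cinner2 \<psi>0 \<psi>0 = 1" "cinner2 \<psi>1 \<psi>1 = 1" "cinner2 \<psi>0 \<psi>1 = 0"
    and d: "density \<rho>0" "density \<rho>1"
    using assms unfolding CQ_states_def by blast
  obtain n where n: "norm n = 1" "proj \<psi>0 = bq n" "proj \<psi>1 = bq (-n)" using proj_bq[OF c] by blast
  obtain r0 where r0: "\<rho>0 = bq r0" using density_bq[OF d(1)] by blast
  obtain r1 where r1: "\<rho>1 = bq r1" using density_bq[OF d(2)] by blast
  have "X = bloch_state (p0 *\<^sub>R n + p1 *\<^sub>R (-n)) (p0 *\<^sub>R r0 + p1 *\<^sub>R r1) (p0 *\<^sub>R outer n r0 + p1 *\<^sub>R outer (-n) r1)"
    unfolding ch n r0 r1 kron_bq using bloch_comb2[OF p] by simp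
  also have "\<dots> = bloch_state ((p0 - p1) *\<^sub>R n) (p0 *\<^sub>R r0 + p1 *\<^sub>R r1) (outer n (p0 *\<^sub>R r0 - p1 *\<^sub>R r1))"
    unfolding outer_lin by (simp add: algebra_simps)
  finally show ?thesis using n(1) by blast
qed

lemma cq_make: assumes "norm e = 1" "p0 \<ge> 0" "p1 \<ge> 0" "p0 + p1 = 1" "norm r0 \<le> 1" "norm r1 \<le> 1"
  shows "bloch_state ((p0 - p1) *\<^sub>R e) (p0 *\<^sub>R r0 + p1 *\<^sub>R r1) (outer e (p0 *\<^sub>R r0 - p1 *\<^sub>R r1)) \<in> CQ_states"
proof -
  obtain \<psi>0 \<psi>1 where c: "cinner2 \<psi>0 \<psi>0 = 1" "cinner2 \<psi>1 \<psi>1 = 1" "cinner2 \<psi>0 \<psi>1 = 0"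
    and pr: "proj \<psi>0 = bq e" "proj \<psi>1 = bq (-e)" using bq_proj_exists[OF assms(1)] by blast
  have "p0 *\<^sub>R kron (proj \<psi>0) (bq r0) + p1 *\<^sub>R kron (proj \<psi>1) (bq r1) \<in> CQ_states"
    unfolding CQ_states_def using assms c bq_density[OF assms(5)] bq_density[OF assms(6)] by blast
  moreover have "p0 *\<^sub>R kron (proj \<psi>0) (bq r0) + p1 *\<^sub>R kron (proj \<psi>1) (bq r1) =
     bloch_state ((p0 - p1) *\<^sub>R e) (p0 *\<^sub>R r0 + p1 *\<^sub>R r1) (outer e (p0 *\<^sub>R r0 - p1 *\<^sub>R r1))"
    unfolding pr kron_bq bloch_comb2[OF assms(4)] outer_lin[symmetric] by (simp add: algebra_simps)
  ultimately show ?thesis by simp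
qed
lemma hs_nonneg: "hs_dist2 A B \<ge> 0"
  unfolding hs_dist2_def by (intro sum_nonneg) simp

lemma hs_self: "hs_dist2 A A = 0"
  unfolding hs_dist2_def by simp

lemma bloch_inj: assumes "bloch_state x y T = bloch_state x' y' T'" shows "x = x' \<and> y = y' \<and> T = T'"
proof -
  have "(1/4) * ((norm (x - x'))^2 + (norm (y - y'))^2 + (norm (T - T'))^2) = 0"
    using hs_self[of "bloch_state x y T"] hs_bloch'[of x y T x' y' T'] assms by simp
  hence "(norm (x - x'))^2 + (norm (y - y'))^2 + (norm (T - T'))^2 = 0" by simp
  hence "norm (x - x') = 0 \<and> norm (y - y') = 0 \<and> norm (T - T') = 0"
    by (simp add: add_nonneg_eq_0_iff)
  thus ?thesis by simp
qed

lemma sep_bloch: assumes "separable \<sigma>"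
  shows "\<exists>(n::nat) p a b. (\<forall>k<n. 0 \<le> p k \<and> norm (a k) \<le> 1 \<and> norm (b k) \<le> 1) \<and> (\<Sum>k<n. p k) = 1 \<and>
     \<sigma> = bloch_state (\<Sum>k<n. p k *\<^sub>R a k) (\<Sum>k<n. p k *\<^sub>R b k) (\<Sum>k<n. p k *\<^sub>R outer (a k) (b k))"
proof -
  obtain n :: nat and p A B where h: "\<forall>k<n. p k \<ge> 0 \<and> density (A k) \<and> density (B k)" and s: "(\<Sum>k<n. p k) = 1"
    and sig: "\<sigma> = (\<Sum>k<n. p k *\<^sub>R kron (A k) (B k))" using assms unfolding separable_def by blast
  have "\<forall>k\<in>{..<n}. \<exists>ab. norm (fst ab) \<le> 1 \<and> norm (snd ab) \<le> 1 \<and> A k = bq (fst ab) \<and> B k = bq (snd ab)"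
  proof
    fix k assume "k \<in> {..<n}"
    hence "density (A k)" "density (B k)" using h by auto
    then obtain a b where "norm a \<le> 1" "A k = bq a" "norm b \<le> 1" "B k = bq b"
      using density_bq by metis
    thus "\<exists>ab. norm (fst ab) \<le> 1 \<and> norm (snd ab) \<le> 1 \<and> A k = bq (fst ab) \<and> B k = bq (snd ab)"
      by (intro exI[of _ "(a,b)"]) simp
  qed
  hence "\<exists>f. \<forall>k\<in>{..<n}. norm (fst (f k)) \<le> 1 \<and> norm (snd (f k)) \<le> 1 \<and> A k = bq (fst (f k)) \<and> B k = bq (snd (f k))"
    by (rule bchoice)
  then obtain f where f: "\<forall>k\<in>{..<n}. norm (fst (f k)) \<le> 1 \<and> norm (snd (f k)) \<le> 1 \<and> A k = bq (fst (f k)) \<and> B k = bq (snd (f k))"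
    by blast
  define a where "a k = fst (f k)" for k
  define b where "b k = snd (f k)" for k
  have "\<sigma> = (\<Sum>k<n. p k *\<^sub>R bloch_state (a k) (b k) (outer (a k) (b k)))"
    unfolding sig by (rule sum.cong) (use f in \<open>simp_all add: a_def b_def kron_bq\<close>)
  also have "\<dots> = bloch_state (\<Sum>k<n. p k *\<^sub>R a k) (\<Sum>k<n. p k *\<^sub>R b k) (\<Sum>k<n. p k *\<^sub>R outer (a k) (b k))"
    by (rule bloch_combn[OF s])
  finally have sg: "\<sigma> = bloch_state (\<Sum>k<n. p k *\<^sub>R a k) (\<Sum>k<n. p k *\<^sub>R b k) (\<Sum>k<n. p k *\<^sub>R outer (a k) (b k))" .
  have "\<forall>k<n. 0 \<le> p k \<and> norm (a k) \<le> 1 \<and> norm (b k) \<le> 1" using h f unfolding a_def b_def by simp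
  thus ?thesis using s sg by blast
qed

lemma vm_sum: "(e::real^3) v* (\<Sum>k<n. p k *\<^sub>R outer (a k) (b k)) = (\<Sum>k<n. (p k * (e \<bullet> a k)) *\<^sub>R b k)"
proof -
  have "(\<Sum>i\<in>UNIV. e$i * (\<Sum>k<n. p k * (a k $ i * b k $ j))) = (\<Sum>k<n. p k * (\<Sum>i\<in>UNIV. e$i * a k $ i) * b k $ j)" for j
  proof -
    have "(\<Sum>i\<in>UNIV. e$i * (\<Sum>k<n. p k * (a k $ i * b k $ j))) = (\<Sum>i\<in>UNIV. \<Sum>k<n. e$i * (p k * (a k $ i * b k $ j)))"
      by (simp add: sum_distrib_left)
    also have "\<dots> = (\<Sum>k<n. \<Sum>i\<in>UNIV. e$i * (p k * (a k $ i * b k $ j)))" by (rule sum.swap)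
    also have "\<dots> = (\<Sum>k<n. p k * (\<Sum>i\<in>UNIV. e$i * a k $ i) * b k $ j)"
      by (rule sum.cong) (simp_all add: sum_distrib_left sum_distrib_right algebra_simps)
    finally show ?thesis .
  qed
  thus ?thesis unfolding vec_eq_iff vector_matrix_mult_def
    by (simp add: sum_component outer_def inner_vec_def)
qed
lemma scale_exists: assumes "norm (u::real^3) \<le> q" shows "\<exists>r. norm r \<le> 1 \<and> q *\<^sub>R r = u"
proof (cases "q = 0")
  case True
  hence "u = 0" using assms by simp
  thus ?thesis using True by (intro exI[of _ 0]) simp
next
  case False
  hence qp: "q > 0" using assms norm_ge_zero[of u] by linarith
  have "norm ((1/q) *\<^sub>R u) \<le> 1" using assms qp by (simp add: field_simps)
  moreover have "q *\<^sub>R ((1/q) *\<^sub>R u) = u" using qp by simp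
  ultimately show ?thesis by blast
qed

lemma geom_le: assumes "X \<in> CQ_states" shows "geom_discord \<rho> \<le> 2 * hs_dist2 \<rho> X"
proof -
  have "Inf (hs_dist2 \<rho> ` CQ_states) \<le> hs_dist2 \<rho> X"
    by (rule cInf_lower) (use assms hs_nonneg in \<open>auto intro: bdd_belowI[of _ 0]\<close>)
  thus ?thesis unfolding geom_discord_def by simp
qed

lemma UB:
  fixes n :: nat and p :: "nat \<Rightarrow> real" and a b :: "nat \<Rightarrow> real^3" and e :: "real^3"
  assumes h: "\<forall>k<n. 0 \<le> p k \<and> norm (a k) \<le> 1 \<and> norm (b k) \<le> 1" and s: "(\<Sum>k<n. p k) = 1"
    and xd: "x = (\<Sum>k<n. p k *\<^sub>R a k)" and yd: "y = (\<Sum>k<n. p k *\<^sub>R b k)"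
    and Td: "T = (\<Sum>k<n. p k *\<^sub>R outer (a k) (b k))" and e: "norm e = 1"
  shows "geom_discord (bloch_state x y T) \<le> (1/2) * ((norm x)^2 - (x \<bullet> e)^2 + (norm T)^2 - (norm (e v* T))^2)"
proof -
  define t where "t = e v* T"
  define c where "c = x \<bullet> e"
  have tk: "t = (\<Sum>k<n. (p k * (e \<bullet> a k)) *\<^sub>R b k)" unfolding t_def Td by (rule vm_sum)
  have ck: "c = (\<Sum>k<n. p k * (e \<bullet> a k))" unfolding c_def xd inner_sum_left by (simp add: inner_commute)
  have ae: "\<bar>e \<bullet> a k\<bar> \<le> 1" if "k<n" for k
    using Cauchy_Schwarz_ineq2[of e "a k"] e h that by (smt (verit) mult_le_one norm_ge_zero)
  have yt0: "y + t = (\<Sum>k<n. (p k * (1 + e \<bullet> a k)) *\<^sub>R b k)" unfolding yd tk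
    by (simp add: sum.distrib[symmetric] distrib_left scaleR_add_left)
  have yt1: "y - t = (\<Sum>k<n. (p k * (1 - e \<bullet> a k)) *\<^sub>R b k)" unfolding yd tk
    by (simp add: sum_subtractf[symmetric] right_diff_distrib scaleR_diff_left)
  have n0: "norm (y + t) \<le> 1 + c"
  proof -
    have "norm (y + t) \<le> (\<Sum>k<n. norm ((p k * (1 + e \<bullet> a k)) *\<^sub>R b k))" unfolding yt0 by (rule norm_sum)
    also have "\<dots> \<le> (\<Sum>k<n. p k * (1 + e \<bullet> a k))"
    proof (rule sum_mono)
      fix k assume "k \<in> {..<n}"
      hence k: "k < n" by simp
      have "0 \<le> p k * (1 + e \<bullet> a k)" using h ae[OF k] k by (simp add: abs_le_iff)
      thus "norm ((p k * (1 + e \<bullet> a k)) *\<^sub>R b k) \<le> p k * (1 + e \<bullet> a k)"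
        using h k by (simp add: mult_left_le)
    qed
    also have "\<dots> = 1 + c" unfolding ck using s by (simp add: distrib_left sum.distrib)
    finally show ?thesis .
  qed
  have n1: "norm (y - t) \<le> 1 - c"
  proof -
    have "norm (y - t) \<le> (\<Sum>k<n. norm ((p k * (1 - e \<bullet> a k)) *\<^sub>R b k))" unfolding yt1 by (rule norm_sum)
    also have "\<dots> \<le> (\<Sum>k<n. p k * (1 - e \<bullet> a k))"
    proof (rule sum_mono)
      fix k assume "k \<in> {..<n}"
      hence k: "k < n" by simp
      have "0 \<le> p k * (1 - e \<bullet> a k)" using h ae[OF k] k by (simp add: abs_le_iff)
      thus "norm ((p k * (1 - e \<bullet> a k)) *\<^sub>R b k) \<le> p k * (1 - e \<bullet> a k)"
        using h k by (simp add: mult_left_le)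
    qed
    also have "\<dots> = 1 - c" unfolding ck using s by (simp add: right_diff_distrib sum_subtractf)
    finally show ?thesis .
  qed
  define q0 where "q0 = (1 + c)/2"
  define q1 where "q1 = (1 - c)/2"
  have "0 \<le> 1 + c" using n0 norm_ge_zero[of "y+t"] by linarith
  hence q0n: "q0 \<ge> 0" unfolding q0_def by simp
  have "0 \<le> 1 - c" using n1 norm_ge_zero[of "y-t"] by linarith
  hence q1n: "q1 \<ge> 0" unfolding q1_def by simp
  have "norm ((1/2) *\<^sub>R (y + t)) \<le> q0" unfolding q0_def using n0 by simp
  then obtain r0 where r0: "norm r0 \<le> 1" "q0 *\<^sub>R r0 = (1/2) *\<^sub>R (y + t)"
    using scale_exists by blast
  have "norm ((1/2) *\<^sub>R (y - t)) \<le> q1" unfolding q1_def using n1 by simp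
  then obtain r1 where r1: "norm r1 \<le> 1" "q1 *\<^sub>R r1 = (1/2) *\<^sub>R (y - t)"
    using scale_exists by blast
  have cq: "bloch_state ((q0 - q1) *\<^sub>R e) (q0 *\<^sub>R r0 + q1 *\<^sub>R r1) (outer e (q0 *\<^sub>R r0 - q1 *\<^sub>R r1)) \<in> CQ_states"
    by (rule cq_make) (use e q0n q1n r0 r1 in \<open>auto simp: q0_def q1_def add_divide_distrib[symmetric]\<close>)
  have yy: "(1/2) *\<^sub>R (y + t) + (1/2) *\<^sub>R (y - t) = y"
    unfolding vec_eq_iff by (simp add: algebra_simps)
  have tt: "(1/2) *\<^sub>R (y + t) - (1/2) *\<^sub>R (y - t) = t"
    unfolding vec_eq_iff by (simp add: algebra_simps)
  have "q0 - q1 = c" unfolding q0_def q1_def by (simp add: field_simps)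
  moreover have "q0 *\<^sub>R r0 + q1 *\<^sub>R r1 = y" "q0 *\<^sub>R r0 - q1 *\<^sub>R r1 = t"
    unfolding r0(2) r1(2) using yy tt by simp_all
  ultimately have cq': "bloch_state (c *\<^sub>R e) y (outer e t) \<in> CQ_states" using cq by simp
  have "hs_dist2 (bloch_state x y T) (bloch_state (c *\<^sub>R e) y (outer e t)) =
     (1/4) * ((norm x)^2 - c^2 + (norm T)^2 - (norm t)^2)"
    unfolding hs_bloch' GL1[OF e] GL2[OF e] c_def t_def by simp
  thus ?thesis using geom_le[OF cq', of "bloch_state x y T"] unfolding c_def t_def by simp
qed
lemma inner_outer: "(T::real^3^3) \<bullet> outer a b = (a v* T) \<bullet> b"
  unfolding inner_vec_def outer_def vector_matrix_mult_def by (simp add: sum_3 algebra_simps)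

lemma F_bound:
  fixes n :: nat and p :: "nat \<Rightarrow> real" and a b :: "nat \<Rightarrow> real^3"
  assumes h: "\<forall>k<n. 0 \<le> p k \<and> norm (a k) \<le> 1 \<and> norm (b k) \<le> 1"
    and Td: "T = (\<Sum>k<n. p k *\<^sub>R outer (a k) (b k))"
  shows "(norm T)^2 \<le> (\<Sum>k<n. p k * norm (a k v* T))"
proof -
  have "(norm T)^2 = T \<bullet> (\<Sum>k<n. p k *\<^sub>R outer (a k) (b k))" unfolding power2_norm_eq_inner using Td by simp
  also have "\<dots> = (\<Sum>k<n. p k * ((a k v* T) \<bullet> b k))" by (simp add: inner_sum_right inner_outer)
  also have "\<dots> \<le> (\<Sum>k<n. p k * norm (a k v* T))"
  proof (rule sum_mono)
    fix k assume "k \<in> {..<n}"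
    hence k: "0 \<le> p k" "norm (b k) \<le> 1" using h by auto
    have "(a k v* T) \<bullet> b k \<le> norm (a k v* T) * norm (b k)" by (rule norm_cauchy_schwarz)
    also have "\<dots> \<le> norm (a k v* T)" using k by (simp add: mult_left_le)
    finally show "p k * ((a k v* T) \<bullet> b k) \<le> p k * norm (a k v* T)" using k by (simp add: mult_left_mono)
  qed
  finally show ?thesis .
qed

lemma norm_outer: "norm (outer a b) = norm a * norm b"
proof -
  have "(norm (outer a b))^2 = (norm a * norm b)^2"
    unfolding power_mult_distrib nsqM nsq3 outer_def by (simp add: sum_3 algebra_simps power2_eq_square)
  thus ?thesis by (simp add: power2_eq_iff_nonneg)
qed

lemma sep_norms:
  fixes n :: nat and p :: "nat \<Rightarrow> real" and a b :: "nat \<Rightarrow> real^3"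
  assumes h: "\<forall>k<n. 0 \<le> p k \<and> norm (a k) \<le> 1 \<and> norm (b k) \<le> 1" and s: "(\<Sum>k<n. p k) = 1"
  shows "norm (\<Sum>k<n. p k *\<^sub>R a k) \<le> 1" "norm (\<Sum>k<n. p k *\<^sub>R outer (a k) (b k)) \<le> 1"
proof -
  have "norm (\<Sum>k<n. p k *\<^sub>R a k) \<le> (\<Sum>k<n. norm (p k *\<^sub>R a k))" by (rule norm_sum)
  also have "\<dots> \<le> (\<Sum>k<n. p k)"
    by (rule sum_mono) (use h in \<open>auto simp: mult_left_le\<close>)
  finally show "norm (\<Sum>k<n. p k *\<^sub>R a k) \<le> 1" using s by simp
  have "norm (\<Sum>k<n. p k *\<^sub>R outer (a k) (b k)) \<le> (\<Sum>k<n. norm (p k *\<^sub>R outer (a k) (b k)))" by (rule norm_sum)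
  also have "\<dots> \<le> (\<Sum>k<n. p k)"
  proof (rule sum_mono)
    fix k assume "k \<in> {..<n}"
    hence k: "0 \<le> p k" "norm (a k) \<le> 1" "norm (b k) \<le> 1" using h by auto
    have "norm (a k) * norm (b k) \<le> 1" using k by (simp add: mult_le_one)
    thus "norm (p k *\<^sub>R outer (a k) (b k)) \<le> p k" using k by (simp add: norm_outer mult_left_le)
  qed
  finally show "norm (\<Sum>k<n. p k *\<^sub>R outer (a k) (b k)) \<le> 1" using s by simp
qed

lemma vm_scale: "(c *\<^sub>R v) v* (T::real^3^3) = c *\<^sub>R (v v* T)"
  unfolding vec_eq_iff vector_matrix_mult_def by (simp add: sum_distrib_left algebra_simps)

lemma vm_orth: fixes T :: "real^3^3" and l :: real and v :: "real^3" assumes "T ** transpose T = (l^2) *\<^sub>R mat 1"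
  shows "(norm (v v* T))^2 = l^2 * (norm v)^2" and "(norm T)^2 = 3 * l^2"
proof -
  have E: "(\<Sum>j\<in>UNIV. T$i$j * T$i'$j) = (if i = i' then l^2 else 0)" for i i'
  proof -
    have "(T ** transpose T) $ i $ i' = ((l^2) *\<^sub>R mat 1) $ i $ i'" using assms by simp
    thus ?thesis by (simp add: matrix_matrix_mult_def transpose_def mat_def)
  qed
  have "(norm (v v* T))^2 = (\<Sum>i\<in>UNIV. \<Sum>i'\<in>UNIV. v$i * v$i' * (\<Sum>j\<in>UNIV. T$i$j * T$i'$j))"
    unfolding nsqv vector_matrix_mult_def by (simp add: sum_3 power2_eq_square algebra_simps)
  thus "(norm (v v* T))^2 = l^2 * (norm v)^2" unfolding E nsq3 by (simp add: sum_3 algebra_simps power2_eq_square)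
  have "(norm T)^2 = (\<Sum>i\<in>UNIV. (\<Sum>j\<in>UNIV. T$i$j * T$i$j))" unfolding nsqM by (simp add: power2_eq_square)
  thus "(norm T)^2 = 3 * l^2" unfolding E by (simp add: sum_3)
qed
lemma e1_norm: "norm (vector [1, 0, 0] :: real^3) = 1"
proof -
  have "(norm (vector [1, 0, 0] :: real^3))^2 = 1^2" unfolding nsq3 by simp
  thus ?thesis using norm_ge_zero[of "vector [1, 0, 0] :: real^3"] power2_eq_iff_nonneg[of "norm (vector [1, 0, 0] :: real^3)" 1]
    by simp
qed

lemma rho_bound:
  fixes x y :: "real^3" and T :: "real^3^3"
  assumes r: "\<rho> = bloch_state x y T" and sep: "separable \<rho>"
    and c: "x = 0 \<or> (\<exists>l::real. T ** transpose T = (l\<^sup>2) *\<^sub>R mat 1)"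
  shows "geom_discord \<rho> \<le> 1/8"
proof -
  obtain n :: nat and p a b where h: "\<forall>k<n. 0 \<le> p k \<and> norm (a k) \<le> 1 \<and> norm (b k) \<le> 1"
    and s: "(\<Sum>k<n. p k) = 1"
    and sg: "\<rho> = bloch_state (\<Sum>k<n. p k *\<^sub>R a k) (\<Sum>k<n. p k *\<^sub>R b k) (\<Sum>k<n. p k *\<^sub>R outer (a k) (b k))"
    using sep_bloch[OF sep] by blast
  have eqs: "x = (\<Sum>k<n. p k *\<^sub>R a k)" "y = (\<Sum>k<n. p k *\<^sub>R b k)" "T = (\<Sum>k<n. p k *\<^sub>R outer (a k) (b k))"
    using bloch_inj[of x y T] sg r by auto
  note ub = UB[OF h s eqs]
  have Fb: "(norm T)^2 \<le> (\<Sum>k<n. p k * norm (a k v* T))" by (rule F_bound[OF h eqs(3)])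
  have n0: "n > 0" using s by (cases n) auto
  from c show ?thesis
  proof
    assume x0: "x = 0"
    define g where "g k = norm (a k v* T)" for k
    define M where "M = Max (g ` {..<n})"
    have fin: "finite (g ` {..<n})" "g ` {..<n} \<noteq> {}" using n0 by auto
    obtain k where k: "k < n" "g k = M" using Max_in[OF fin] unfolding M_def by auto
    have "(\<Sum>k<n. p k * g k) \<le> (\<Sum>k<n. p k * M)"
      by (rule sum_mono) (use h fin in \<open>auto intro!: mult_left_mono simp: M_def\<close>)
    also have "\<dots> = M" using s by (simp add: sum_distrib_right[symmetric])
    finally have FM: "(norm T)^2 \<le> g k" using Fb k unfolding g_def by simp
    obtain e where e: "norm e = 1" "(norm T)^2 \<le> norm (e v* T)"
    proof (cases "a k = 0")
      case True
      hence "g k = 0" unfolding g_def by (simp add: vector_matrix_mult_def vec_eq_iff)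
      hence "(norm T)^2 \<le> norm (vector [1, 0, 0] v* T)" using FM by simp
      thus ?thesis using that e1_norm by blast
    next
      case False
      define e where "e = (1 / norm (a k)) *\<^sub>R a k"
      have ne: "norm e = 1" unfolding e_def using False by simp
      have "norm (e v* T) = g k / norm (a k)" unfolding e_def vm_scale g_def by simp
      also have "\<dots> \<ge> g k"
      proof -
        have "norm (a k) \<le> 1" "norm (a k) > 0" using h k False by auto
        moreover have "g k \<ge> 0" unfolding g_def by simp
        ultimately show ?thesis by (simp add: le_divide_eq mult_left_le)
      qed
      finally show ?thesis using that ne FM by (meson order.trans)
    qed
    have "geom_discord \<rho> \<le> (1/2) * ((norm x)^2 - (x \<bullet> e)^2 + (norm T)^2 - (norm (e v* T))^2)"
      using ub[OF e(1)] r by simp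
    also have "\<dots> = (1/2) * ((norm T)^2 - (norm (e v* T))^2)" using x0 by simp
    also have "\<dots> \<le> (1/2) * ((norm T)^2 - ((norm T)^2)^2)"
    proof -
      have "((norm T)^2)^2 \<le> (norm (e v* T))^2" by (rule power_mono[OF e(2)]) simp
      thus ?thesis by simp
    qed
    also have "\<dots> \<le> 1/8"
    proof -
      have "0 \<le> ((norm T)^2 - 1/2)^2" by simp
      thus ?thesis by (simp add: power2_eq_square algebra_simps)
    qed
    finally show ?thesis .
  next
    assume "\<exists>l::real. T ** transpose T = (l\<^sup>2) *\<^sub>R mat 1"
    then obtain l :: real where l: "T ** transpose T = (l\<^sup>2) *\<^sub>R mat 1" by blast
    have "3 * l^2 \<le> (\<Sum>k<n. p k * \<bar>l\<bar>)"
    proof -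
      have "(\<Sum>k<n. p k * norm (a k v* T)) \<le> (\<Sum>k<n. p k * \<bar>l\<bar>)"
      proof (rule sum_mono)
        fix k assume "k \<in> {..<n}"
        hence k: "0 \<le> p k" "norm (a k) \<le> 1" using h by auto
        have "(norm (a k v* T))^2 = (\<bar>l\<bar> * norm (a k))^2" using vm_orth(1)[OF l, of "a k"]
          by (simp add: power_mult_distrib)
        hence "norm (a k v* T) = \<bar>l\<bar> * norm (a k)" by (simp add: power2_eq_iff_nonneg)
        also have "\<dots> \<le> \<bar>l\<bar>" using k by (simp add: mult_left_le)
        finally show "p k * norm (a k v* T) \<le> p k * \<bar>l\<bar>" using k by (simp add: mult_left_mono)
      qed
      thus ?thesis using Fb vm_orth(2)[OF l] by simp
    qed
    hence l3: "3 * \<bar>l\<bar>^2 \<le> \<bar>l\<bar>" using s by (simp add: sum_distrib_right[symmetric])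
    have l9: "l^2 \<le> 1/9"
    proof (cases "l = 0")
      case True thus ?thesis by simp
    next
      case False
      have "\<bar>l\<bar> * (3 * \<bar>l\<bar>) \<le> \<bar>l\<bar> * 1" using l3 by (simp add: power2_eq_square algebra_simps)
      hence "3 * \<bar>l\<bar> \<le> 1" using False by (simp add: mult_le_cancel_left_pos)
      hence "\<bar>l\<bar> \<le> 1/3" by simp
      hence "\<bar>l\<bar>^2 \<le> (1/3)^2" by (rule power_mono) simp
      thus ?thesis by (simp add: power2_eq_square)
    qed
    obtain e where e: "norm e = 1" "x \<bullet> e = norm x"
    proof (cases "x = 0")
      case True thus ?thesis using that e1_norm by simp
    next
      case False
      define e where "e = (1 / norm x) *\<^sub>R x"
      have "norm e = 1" unfolding e_def using False by simp
      moreover have "x \<bullet> e = norm x" unfolding e_def using False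
        by (simp add: power2_norm_eq_inner[symmetric] power2_eq_square)
      ultimately show ?thesis using that by blast
    qed
    have "geom_discord \<rho> \<le> (1/2) * ((norm x)^2 - (x \<bullet> e)^2 + (norm T)^2 - (norm (e v* T))^2)"
      using ub[OF e(1)] r by simp
    also have "\<dots> = l^2" using e vm_orth(1)[OF l, of e] vm_orth(2)[OF l] by simp
    finally show ?thesis using l9 by simp
  qed
qed
lemma geom_le1: assumes "separable \<sigma>" shows "geom_discord \<sigma> \<le> 1"
proof -
  obtain n :: nat and p a b where h: "\<forall>k<n. 0 \<le> p k \<and> norm (a k) \<le> 1 \<and> norm (b k) \<le> 1"
    and s: "(\<Sum>k<n. p k) = 1"
    and sg: "\<sigma> = bloch_state (\<Sum>k<n. p k *\<^sub>R a k) (\<Sum>k<n. p k *\<^sub>R b k) (\<Sum>k<n. p k *\<^sub>R outer (a k) (b k))"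
    using sep_bloch[OF assms] by blast
  define X where "X = (\<Sum>k<n. p k *\<^sub>R a k)"
  define T where "T = (\<Sum>k<n. p k *\<^sub>R outer (a k) (b k))"
  have nX: "norm X \<le> 1" and nT: "norm T \<le> 1" using sep_norms[OF h s] unfolding X_def T_def by auto
  define Y where "Y = (\<Sum>k<n. p k *\<^sub>R b k)"
  have sg': "\<sigma> = bloch_state X Y T" using sg unfolding X_def Y_def T_def .
  have "geom_discord \<sigma> \<le> (1/2) * ((norm X)^2 - (X \<bullet> vector [1,0,0])^2 + (norm T)^2 - (norm (vector [1,0,0] v* T))^2)"
    unfolding sg' by (rule UB[OF h s X_def Y_def T_def e1_norm])
  also have "\<dots> \<le> (1/2) * ((norm X)^2 + (norm T)^2)"
    by (rule mult_left_mono) (simp_all add: algebra_simps)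
  also have "\<dots> \<le> (1/2) * (1 + 1)"
  proof -
    have "(norm X)^2 \<le> 1" "(norm T)^2 \<le> 1" using nX nT norm_ge_zero[of X] norm_ge_zero[of T] by (simp_all add: power_le_one)
    thus ?thesis by (intro mult_left_mono add_mono) simp_all
  qed
  finally show ?thesis by simp
qed

definition ta1 :: "real^3" where "ta1 = vector [3/5, 4/5, 0]"
definition ta2 :: "real^3" where "ta2 = vector [3/5, -4/5, 0]"
definition tb1 :: "real^3" where "tb1 = vector [1, 0, 0]"
definition tb2 :: "real^3" where "tb2 = vector [0, 1, 0]"
definition tau :: qqop where "tau = bloch_state ((1/2) *\<^sub>R ta1 + (1/2) *\<^sub>R ta2) ((1/2) *\<^sub>R tb1 + (1/2) *\<^sub>R tb2)
   ((1/2) *\<^sub>R outer ta1 tb1 + (1/2) *\<^sub>R outer ta2 tb2)"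

lemma norm_le1: "(norm (v::real^3))^2 \<le> 1 \<Longrightarrow> norm v \<le> 1"
  by (rule power2_le_imp_le) simp_all

lemma tau_sep: "separable tau"
proof -
  have n: "norm ta1 \<le> 1" "norm ta2 \<le> 1" "norm tb1 \<le> 1" "norm tb2 \<le> 1"
    by (rule norm_le1, unfold nsq3 ta1_def ta2_def tb1_def tb2_def, simp add: power2_eq_square)+
  define A where "A = (\<lambda>k::nat. if k = 0 then bq ta1 else bq ta2)"
  define B where "B = (\<lambda>k::nat. if k = 0 then bq tb1 else bq tb2)"
  define p where "p = (\<lambda>k::nat. 1/2::real)"
  have "tau = (1/2) *\<^sub>R kron (bq ta1) (bq tb1) + (1/2) *\<^sub>R kron (bq ta2) (bq tb2)"
    unfolding tau_def kron_bq by (rule bloch_comb2[symmetric]) simp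
  also have "\<dots> = (\<Sum>k<2. p k *\<^sub>R kron (A k) (B k))"
    by (simp add: numeral_2_eq_2 A_def B_def p_def)
  finally have E: "tau = (\<Sum>k<2. p k *\<^sub>R kron (A k) (B k))" .
  have S: "(\<Sum>k<2. p k) = 1" by (simp add: p_def)
  have P: "\<forall>k<2. p k \<ge> 0 \<and> density (A k) \<and> density (B k)"
    using n bq_density by (auto simp: A_def B_def p_def)
  show ?thesis unfolding separable_def
    apply (rule exI[of _ 2], rule exI[of _ p], rule exI[of _ A], rule exI[of _ B])
    using P S E by blast
qed

lemma tau_hs: assumes "X \<in> CQ_states" shows "hs_dist2 tau X \<ge> 2/25"
proof -
  obtain n q y' w where n: "norm n = 1" and X: "X = bloch_state (q *\<^sub>R n) y' (outer n w)"
    using cq_bloch[OF assms] by blast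
  define x0 where "x0 = (1/2) *\<^sub>R ta1 + (1/2) *\<^sub>R ta2"
  define T0 where "T0 = (1/2) *\<^sub>R outer ta1 tb1 + (1/2) *\<^sub>R outer ta2 tb2"
  have un: "n$1^2 + n$2^2 + n$3^2 = 1" using n nsq3[of n] by simp
  have x0e: "x0 = vector [3/5, 0, 0]" unfolding x0_def ta1_def ta2_def vec_eq_iff forall_3 by simp
  have T0e: "T0 = vector [vector [3/10, 3/10, 0], vector [2/5, -2/5, 0], vector [0,0,0]]"
    unfolding T0_def ta1_def ta2_def tb1_def tb2_def vec_eq_iff forall_3 outer_def by simp
  have q1: "(norm x0)^2 = 9/25" unfolding x0e nsq3 by (simp add: power2_eq_square)
  have q2: "(x0 \<bullet> n)^2 = 9/25 * n$1^2" unfolding x0e inner_vec_def sum_3 by (simp add: power2_eq_square)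
  have q3: "(norm T0)^2 = 1/2" unfolding T0e nsqM sum_3 by (simp add: power2_eq_square)
  have q4: "(norm (n v* T0))^2 = 9/50 * n$1^2 + 8/25 * n$2^2"
    unfolding T0e nsq3 vector_matrix_mult_def sum_3 by (simp add: power2_eq_square algebra_simps)
  have Q: "(norm x0)^2 - (x0 \<bullet> n)^2 + (norm T0)^2 - (norm (n v* T0))^2 = 43/50 - 27/50 * n$1^2 - 8/25 * n$2^2"
    unfolding q1 q2 q3 q4 by simp
  have Qb: "43/50 - 27/50 * n$1^2 - 8/25 * n$2^2 \<ge> 8/25"
    using un zero_le_power2[of "n$3"] zero_le_power2[of "n$2"] by linarith
  have "hs_dist2 tau X = (1/4) * ((norm (x0 - q *\<^sub>R n))^2 + (norm (((1/2) *\<^sub>R tb1 + (1/2) *\<^sub>R tb2) - y'))^2 + (norm (T0 - outer n w))^2)"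
    unfolding tau_def X hs_bloch' x0_def T0_def by simp
  also have "\<dots> \<ge> (1/4) * ((norm x0)^2 - (x0 \<bullet> n)^2 + (norm T0)^2 - (norm (n v* T0))^2)"
    unfolding GL1[OF n] GL2[OF n] by simp
  finally show ?thesis using Q Qb by simp
qed

lemma tau_geom: "geom_discord tau \<ge> 4/25"
proof -
  have ne: "CQ_states \<noteq> {}"
    using cq_make[OF e1_norm, of 1 0 0 0] by auto
  have "2/25 \<le> Inf (hs_dist2 tau ` CQ_states)"
    by (rule cInf_greatest) (use ne tau_hs in auto)
  thus ?thesis unfolding geom_discord_def by simp
qed

theorem proposition2:
  fixes x y :: "real^3" and T :: "real^3^3" and \<rho> :: qqop
  assumes "\<rho> = bloch_state x y T"
    and "separable \<rho>"
    and "x = 0 \<or> (\<exists>l::real. T ** transpose T = (l\<^sup>2) *\<^sub>R mat 1)"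
  shows "geom_discord \<rho> < Sup (geom_discord ` {\<tau>. separable \<tau>})"
proof -
  have "geom_discord \<rho> \<le> 1/8" by (rule rho_bound[OF assms])
  also have "\<dots> < 4/25" by simp
  also have "\<dots> \<le> geom_discord tau" by (rule tau_geom)
  also have "\<dots> \<le> Sup (geom_discord ` {\<tau>. separable \<tau>})"
    by (rule cSup_upper) (use tau_sep geom_le1 in \<open>auto intro: bdd_aboveI[of _ 1]\<close>)
  finally show ?thesis .
qed
end
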